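(* Suppose the functional $\tilde I[\tilde q]=\int_a^b\tilde L(x,\tilde q(x),\dot{\tilde q}(x))\,dx$ is invariant, in the sense (with transformation of the independent variable) described in the context, under the one-parameter group of infinitesimal transformations $\hat x=x+\epsilon\tau(x,\tilde q)+o(\epsilon)$, $\tilde{\hat q}(x)=\tilde q(x)+\epsilon\tilde\zeta(x,\tilde q)+o(\epsilon)$, for every fuzzy-valued function $\tilde q$ with $C^2$ level functions. For $r\in[0,1]$ define, with $\underline L^r,\overline L^r$ and their partial derivatives evaluated at $(x,\underline q^r,\overline q^r,\dot{\underline q}^r,\dot{\overline q}^r)$ and $\underline\zeta^r,\overline\zeta^r,\tau$ evaluated at $(x,\underline q^r,\overline q^r)$, $$\underline C^r=\partial_4\underline L^r\,\underline\zeta^r+\partial_5\underline L^r\,\overline\zeta^r+\big[\underline L^r-\partial_4\underline L^r\,\dot{\underline q}^r-\partial_5\underline L^r\,\dot{\overline q}^r\big]\tau,$$ $$\overline C^r=\partial_4\overline L^r\,\underline\zeta^r+\partial_5\overline L^r\,\overline\zeta^r+\big[\overline L^r-\partial_4\overline L^r\,\dot{\underline q}^r-\partial_5\overline L^r\,\dot{\overline q}^r\big]\tau.$$ Then the fuzzy quantity $\tilde C$ with these lower and upper bounds is conserved: for every $\tilde q$ with $C^2$ level functions satisfying the fuzzy Euler–Lagrange equations, $\frac{d}{dx}\underline C^r=\frac{d}{dx}\overline C^r=0$ for all $r\in[0,1]$.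
   Context: A fuzzy number is a map $\tilde a:\mathbb R\to[0,1]$ that is normal, fuzzy convex, upper semicontinuous and has compact support; its $r$-level sets are compact intervals $[\underline a^r,\overline a^r]$. A fuzzy-valued function $\tilde q$ on $[a,b]$ is described by its level functions $\underline q^r(x),\overline q^r(x)$, $r\in[0,1]$; dots denote derivatives with respect to the independent variable. The fuzzy Lagrangian is given levelwise by $C^2$ functions $\underline L^r,\overline L^r:[a,b]\times\mathbb R^4\to\mathbb R$ evaluated at $(x,\underline q^r,\overline q^r,\dot{\underline q}^r,\dot{\overline q}^r)$, and $\tilde I$ has level endpoints $\int_a^b\underline L^rdx$, $\int_a^b\overline L^rdx$. $\partial_i$ is the partial derivative with respect to the $i$-th argument of $(x,u,v,p,w)$. Fuzzy Euler–Lagrange equations: for all $r$, $\partial_2\underline L^r-\frac{d}{dx}\partial_4\underline L^r=0$, $\partial_3\underline L^r-\frac{d}{dx}\partial_5\underline L^r=0$, $\partial_2\overline L^r-\frac{d}{dx}\partial_4\overline L^r=0$, $\partial_3\overline L^r-\frac{d}{dx}\partial_5\overline L^r=0$. Transformations: $\tau:[a,b]\times\mathbb R^2\to\mathbb R$ and, for each $r$, $\underline\zeta^r,\overline\zeta^r:[a,b]\times\mathbb R^2\to\mathbb R$ are $C^1$. For $\epsilon>0$ and each $r$, the new independent variable is $\hat x(x)=x+\epsilon\tau(x,\underline q^r(x),\overline q^r(x))+o(\epsilon)$ and the transformed level functions are defined by $\underline{\hat q}^r(\hat x(x))=\underline q^r(x)+\epsilon\underline\zeta^r(x,\underline q^r(x),\overline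 q^r(x))+o(\epsilon)$, $\overline{\hat q}^r(\hat x(x))=\overline q^r(x)+\epsilon\overline\zeta^r(x,\underline q^r(x),\overline q^r(x))+o(\epsilon)$, with remainders $C^1$ and $o(\epsilon)$ together with their derivatives; $\dot{\underline{\hat q}}^r(\hat x)$ denotes the derivative with respect to $\hat x$. Invariance: for all $r\in[0,1]$, every $[t_a,t_b]\subseteq[a,b]$ and every $\epsilon>0$, $\int_{t_a}^{t_b}\underline L^r(x,\underline q^r(x),\overline q^r(x),\dot{\underline q}^r(x),\dot{\overline q}^r(x))dx=\int_{\hat x(t_a)}^{\hat x(t_b)}\underline L^r(\hat x,\underline{\hat q}^r(\hat x),\overline{\hat q}^r(\hat x),\dot{\underline{\hat q}}^r(\hat x),\dot{\overline{\hat q}}^r(\hat x))d\hat x$, and likewise for $\overline L^r$. *)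

theory Defs
  imports "HOL-Analysis.Analysis"
begin

type_synonym R3 = "real \<times> real \<times> real"
type_synonym R5 = "real \<times> real \<times> real \<times> real \<times> real"

definition usc :: "(real \<Rightarrow> real) \<Rightarrow> bool" where
  "usc u \<longleftrightarrow> (\<forall>t. \<forall>e>0. \<exists>d>0. \<forall>s. \<bar>s - t\<bar> < d \<longrightarrow> u s < u t + e)"

definition fuzzy_number :: "(real \<Rightarrow> real) \<Rightarrow> bool" where
  "fuzzy_number u \<longleftrightarrow>
     (\<forall>t. 0 \<le> u t \<and> u t \<le> 1) \<and>
     (\<exists>t. u t = 1) \<and>
     (\<forall>s t l. 0 \<le> l \<and> l \<le> 1 \<longrightarrow> min (u s) (u t) \<le> u (l * s + (1 - l) * t)) \<and>
     usc u \<and>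
     compact (closure {t. 0 < u t})"

definition flevel :: "(real \<Rightarrow> real) \<Rightarrow> real \<Rightarrow> real set" where
  "flevel u r = (if r = 0 then closure {t. 0 < u t} else {t. r \<le> u t})"

definition flower :: "(real \<Rightarrow> real) \<Rightarrow> real \<Rightarrow> real" where
  "flower u r = Inf (flevel u r)"

definition fupper :: "(real \<Rightarrow> real) \<Rightarrow> real \<Rightarrow> real" where
  "fupper u r = Sup (flevel u r)"

definition C1_within :: "'a::real_normed_vector set \<Rightarrow> ('a \<Rightarrow> 'b::real_normed_vector) \<Rightarrow> bool" where
  "C1_within S f \<longleftrightarrow>
     (\<exists>f'. (\<forall>z\<in>S. (f has_derivative blinfun_apply (f' z)) (at z within S)) \<and> continuous_on S f')"

definition C2_within :: "'a::real_normed_vector set \<Rightarrow> ('a \<Rightarrow> 'b::real_normed_vector) \<Rightarrow> bool" where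
  "C2_within S f \<longleftrightarrow>
     (\<exists>f'. (\<forall>z\<in>S. (f has_derivative blinfun_apply (f' z)) (at z within S)) \<and> C1_within S f')"

definition fuzzy_C2_fun :: "real \<Rightarrow> real \<Rightarrow> (real \<Rightarrow> real \<Rightarrow> real) \<Rightarrow> bool" where
  "fuzzy_C2_fun a b q \<longleftrightarrow>
     (\<forall>x\<in>{a..b}. fuzzy_number (q x)) \<and>
     (\<forall>r\<in>{0..1}. C2_within {a..b} (\<lambda>x. flower (q x) r) \<and> C2_within {a..b} (\<lambda>x. fupper (q x) r))"

definition dotx :: "real \<Rightarrow> real \<Rightarrow> (real \<Rightarrow> real) \<Rightarrow> real \<Rightarrow> real" where
  "dotx a b f x = vector_derivative f (at x within {a..b})"

definition pd2 :: "(R5 \<Rightarrow> real) \<Rightarrow> R5 \<Rightarrow> real" where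
  "pd2 L z = (case z of (x,u,v,p,w) \<Rightarrow> deriv (\<lambda>s. L (x,s,v,p,w)) u)"
definition pd3 :: "(R5 \<Rightarrow> real) \<Rightarrow> R5 \<Rightarrow> real" where
  "pd3 L z = (case z of (x,u,v,p,w) \<Rightarrow> deriv (\<lambda>s. L (x,u,s,p,w)) v)"
definition pd4 :: "(R5 \<Rightarrow> real) \<Rightarrow> R5 \<Rightarrow> real" where
  "pd4 L z = (case z of (x,u,v,p,w) \<Rightarrow> deriv (\<lambda>s. L (x,u,v,s,w)) p)"
definition pd5 :: "(R5 \<Rightarrow> real) \<Rightarrow> R5 \<Rightarrow> real" where
  "pd5 L z = (case z of (x,u,v,p,w) \<Rightarrow> deriv (\<lambda>s. L (x,u,v,p,s)) w)"

definition oint :: "real \<Rightarrow> real \<Rightarrow> (real \<Rightarrow> real) \<Rightarrow> real" where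
  "oint c d f = (if c \<le> d then integral {c..d} f else - integral {d..c} f)"

definition small_remainder :: "real \<Rightarrow> real \<Rightarrow> (real \<Rightarrow> real \<Rightarrow> real) \<Rightarrow> bool" where
  "small_remainder a b R \<longleftrightarrow>
     (\<forall>\<epsilon>>0. C1_within {a..b} (R \<epsilon>)) \<and>
     (\<forall>e>0. \<exists>d>0. \<forall>\<epsilon>. 0 < \<epsilon> \<and> \<epsilon> < d \<longrightarrow>
        (\<forall>x\<in>{a..b}. \<bar>R \<epsilon> x\<bar> \<le> e * \<epsilon> \<and> \<bar>vector_derivative (R \<epsilon>) (at x within {a..b})\<bar> \<le> e * \<epsilon>))"

definition invariant_at ::
  "real \<Rightarrow> real \<Rightarrow> (R5 \<Rightarrow> real) \<Rightarrow> (R3 \<Rightarrow> real) \<Rightarrow> (R3 \<Rightarrow> real) \<Rightarrow> (R3 \<Rightarrow> real)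
   \<Rightarrow> (real \<Rightarrow> real \<Rightarrow> real) \<Rightarrow> (real \<Rightarrow> real \<Rightarrow> real) \<Rightarrow> (real \<Rightarrow> real \<Rightarrow> real)
   \<Rightarrow> (real \<Rightarrow> real) \<Rightarrow> (real \<Rightarrow> real) \<Rightarrow> bool" where
  "invariant_at a b L tau zl zh Rx Rl Rh ql qh \<longleftrightarrow>
     (\<forall>ta tb \<epsilon>. a \<le> ta \<and> ta \<le> tb \<and> tb \<le> b \<and> 0 < \<epsilon> \<longrightarrow>
       (let X = (\<lambda>x. x + \<epsilon> * tau (x, ql x, qh x) + Rx \<epsilon> x) in
        \<forall>qhl qhh dqhl dqhh.
          (\<forall>x\<in>{a..b}. qhl (X x) = ql x + \<epsilon> * zl (x, ql x, qh x) + Rl \<epsilon> x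
                    \<and> qhh (X x) = qh x + \<epsilon> * zh (x, ql x, qh x) + Rh \<epsilon> x) \<and>
          (\<forall>y\<in>closed_segment (X ta) (X tb).
              (qhl has_real_derivative dqhl y) (at y within closed_segment (X ta) (X tb)) \<and>
              (qhh has_real_derivative dqhh y) (at y within closed_segment (X ta) (X tb)))
          \<longrightarrow>
          integral {ta..tb} (\<lambda>x. L (x, ql x, qh x, dotx a b ql x, dotx a b qh x))
          = oint (X ta) (X tb) (\<lambda>y. L (y, qhl y, qhh y, dqhl y, dqhh y))))"

definition EL_at :: "real \<Rightarrow> real \<Rightarrow> (R5 \<Rightarrow> real) \<Rightarrow> (real \<Rightarrow> real) \<Rightarrow> (real \<Rightarrow> real) \<Rightarrow> bool" where
  "EL_at a b L ql qh \<longleftrightarrow>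
     (\<forall>x\<in>{a..b}.
        pd2 L (x, ql x, qh x, dotx a b ql x, dotx a b qh x)
          - dotx a b (\<lambda>t. pd4 L (t, ql t, qh t, dotx a b ql t, dotx a b qh t)) x = 0 \<and>
        pd3 L (x, ql x, qh x, dotx a b ql x, dotx a b qh x)
          - dotx a b (\<lambda>t. pd5 L (t, ql t, qh t, dotx a b ql t, dotx a b qh t)) x = 0)"

definition noether_C ::
  "real \<Rightarrow> real \<Rightarrow> (R5 \<Rightarrow> real) \<Rightarrow> (R3 \<Rightarrow> real) \<Rightarrow> (R3 \<Rightarrow> real) \<Rightarrow> (R3 \<Rightarrow> real)
   \<Rightarrow> (real \<Rightarrow> real) \<Rightarrow> (real \<Rightarrow> real) \<Rightarrow> real \<Rightarrow> real" where
  "noether_C a b L tau zl zh ql qh x =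
     (let z = (x, ql x, qh x, dotx a b ql x, dotx a b qh x); y = (x, ql x, qh x) in
      pd4 L z * zl y + pd5 L z * zh y
      + (L z - pd4 L z * dotx a b ql x - pd5 L z * dotx a b qh x) * tau y)"

end

theory Submission
  imports Defs
begin


lemma blin_real: "blinfun_apply (F :: real \<Rightarrow>\<^sub>L real) = (*) (F 1)"
proof
  fix h show "blinfun_apply F h = F 1 * h"
    using blinfun.scaleR_right[of F h 1] by simp
qed

lemma has_real_from_blin:
  assumes "(f has_derivative blinfun_apply F) net"
  shows "(f has_real_derivative F 1) net"
proof -
  have e: "blinfun_apply F = (*) (F 1)" by (rule blin_real)
  show ?thesis using assms unfolding has_field_derivative_def by (simp only: e[symmetric])
qed

lemma C1_real:
  fixes f :: "real \<Rightarrow> real"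
  assumes ab: "a < b" and C: "C1_within {a..b} f"
  shows "\<forall>t\<in>{a..b}. (f has_real_derivative vector_derivative f (at t within {a..b})) (at t within {a..b})"
    and "continuous_on {a..b} (\<lambda>t. vector_derivative f (at t within {a..b}))"
proof -
  obtain f' where d: "\<forall>z\<in>{a..b}. (f has_derivative blinfun_apply (f' z)) (at z within {a..b})"
    and c: "continuous_on {a..b} f'" using C unfolding C1_within_def by blast
  have dd: "(f has_real_derivative f' z 1) (at z within {a..b})" if "z \<in> {a..b}" for z
    using d that has_real_from_blin by blast
  have vd: "vector_derivative f (at z within {a..b}) = f' z 1" if "z \<in> {a..b}" for z
    using vector_derivative_within_cbox[of a b z f "f' z 1"] ab that dd[OF that]
    unfolding has_real_derivative_iff_has_vector_derivative cbox_interval by blast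
  show "\<forall>t\<in>{a..b}. (f has_real_derivative vector_derivative f (at t within {a..b})) (at t within {a..b})"
    using dd vd by simp
  have "continuous_on {a..b} (\<lambda>t. f' t 1)"
    by (intro blinfun.continuous_on c continuous_on_const)
  thus "continuous_on {a..b} (\<lambda>t. vector_derivative f (at t within {a..b}))"
    using vd continuous_on_eq by fastforce
qed


lemma pw:
  fixes L :: "R5 \<Rightarrow> real" and X X1 A A1 B B1 u v u1 v1 :: "real \<Rightarrow> real"
  assumes ab: "a < b"
    and Lc: "continuous_on ({a..b} \<times> UNIV) L"
    and uc: "continuous_on {a..b} u" and vc: "continuous_on {a..b} v"
    and u1c: "continuous_on {a..b} u1" and v1c: "continuous_on {a..b} v1"
    and dX: "\<forall>t\<in>{a..b}. (X has_real_derivative X1 t) (at t within {a..b})"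
    and X1c: "continuous_on {a..b} X1" and X1pos: "\<forall>t\<in>{a..b}. X1 t > 0"
    and dA: "\<forall>t\<in>{a..b}. (A has_real_derivative A1 t) (at t within {a..b})"
    and A1c: "continuous_on {a..b} A1"
    and dB: "\<forall>t\<in>{a..b}. (B has_real_derivative B1 t) (at t within {a..b})"
    and B1c: "continuous_on {a..b} B1"
    and tt: "a < ta" "ta < x0" "x0 < t1" "t1 < b"
    and Xin: "a \<le> X ta" "X t1 \<le> b"
    and H: "\<forall>tb. ta \<le> tb \<and> tb \<le> t1 \<longrightarrow> (\<forall>qhl qhh dqhl dqhh.
          (\<forall>x\<in>{a..b}. qhl (X x) = A x \<and> qhh (X x) = B x) \<and>
          (\<forall>y\<in>closed_segment (X ta) (X tb).
              (qhl has_real_derivative dqhl y) (at y within closed_segment (X ta) (X tb)) \<and>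
              (qhh has_real_derivative dqhh y) (at y within closed_segment (X ta) (X tb)))
          \<longrightarrow> integral {ta..tb} (\<lambda>x. L (x, u x, v x, u1 x, v1 x))
              = oint (X ta) (X tb) (\<lambda>y. L (y, qhl y, qhh y, dqhl y, dqhh y)))"
  shows "L (x0, u x0, v x0, u1 x0, v1 x0) = L (X x0, A x0, B x0, A1 x0 / X1 x0, B1 x0 / X1 x0) * X1 x0"
proof -
  define I where "I = {a..b}"
  have Xc: "continuous_on I X" unfolding I_def using dX by (intro DERIV_continuous_on) auto
  have Ac: "continuous_on I A" unfolding I_def using dA by (intro DERIV_continuous_on) auto
  have Bc: "continuous_on I B" unfolding I_def using dB by (intro DERIV_continuous_on) auto
  have atI: "at t within I = at t" if "a < t" "t < b" for t
    unfolding I_def using that by (rule at_within_Icc_at)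
  have mono: "X s < X t" if "s \<in> I" "t \<in> I" "s < t" for s t
  proof (rule DERIV_pos_imp_increasing_open[OF \<open>s < t\<close>])
    fix y assume "s < y" "y < t"
    hence y: "a < y" "y < b" using that unfolding I_def by auto
    hence "y \<in> I" unfolding I_def by auto
    thus "\<exists>D. DERIV X y :> D \<and> D > 0" using dX X1pos atI[OF y] unfolding I_def by metis
  next
    show "continuous_on {s..t} X" using Xc that unfolding I_def by (auto intro: continuous_on_subset)
  qed
  have mono_le: "X s \<le> X t" if "s \<in> I" "t \<in> I" "s \<le> t" for s t
    using mono[OF that(1,2)] that(3) by (cases "s = t") auto
  have inj: "inj_on X I" unfolding inj_on_def using mono by (metis linorder_neq_iff)
  define g where "g = inv_into I X"
  have gX: "g (X t) = t" if "t \<in> I" for t unfolding g_def using inj that by simp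
  have XI: "X ` I = {X a..X b}"
  proof
    show "X ` I \<subseteq> {X a..X b}"
    proof (rule image_subsetI)
      fix t assume t: "t \<in> I"
      have "a \<in> I" "b \<in> I" "a \<le> t" "t \<le> b" using ab t unfolding I_def by auto
      thus "X t \<in> {X a..X b}" using mono_le t by simp
    qed
    show "{X a..X b} \<subseteq> X ` I"
    proof
      fix y assume "y \<in> {X a..X b}"
      then obtain x where "a \<le> x" "x \<le> b" "X x = y"
        using IVT'[of X a y b] Xc ab unfolding I_def by auto
      thus "y \<in> X ` I" unfolding I_def by auto
    qed
  qed
  have gc: "continuous_on {X a..X b} g"
    using continuous_on_inv[OF Xc _ ] gX XI unfolding I_def by (metis compact_Icc)
  have Xg: "X (g y) = y" if "y \<in> {X a..X b}" for y
  proof -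
    have "y \<in> X ` I" using that XI by simp
    then obtain t where "t \<in> I" "y = X t" by blast
    thus ?thesis using gX by simp
  qed
  have gI: "g y \<in> I" if "y \<in> {X a..X b}" for y
  proof -
    have "y \<in> X ` I" using that XI by simp
    then obtain t where "t \<in> I" "y = X t" by blast
    thus ?thesis using gX by simp
  qed
  have gopen: "a < g y \<and> g y < b" if "X a < y" "y < X b" for y
  proof -
    have "g y \<in> I" using gI that by auto
    moreover have "g y \<noteq> a" "g y \<noteq> b" using Xg[of y] that by auto
    ultimately show ?thesis unfolding I_def by auto
  qed
  have aI: "a \<in> I" "b \<in> I" "ta \<in> I" "t1 \<in> I" "x0 \<in> I" using tt ab unfolding I_def by auto
  define qhl where "qhl y = A (g y)" for y
  define qhh where "qhh y = B (g y)" for y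
  define dqhl where "dqhl y = A1 (g y) / X1 (g y)" for y
  define dqhh where "dqhh y = B1 (g y) / X1 (g y)" for y
  have dg: "DERIV g y :> inverse (X1 (g y))" if "X a < y" "y < X b" for y
  proof (rule DERIV_inverse_function[where f=X and a="X a" and b="X b"])
    have "a < g y" "g y < b" using gopen that by auto
    moreover have "g y \<in> I" using gI that by auto
    ultimately show "DERIV X (g y) :> X1 (g y)" using dX atI unfolding I_def by metis
    show "X1 (g y) \<noteq> 0" using X1pos \<open>g y \<in> I\<close> unfolding I_def by fastforce
    show "X a < y" "y < X b" by fact+
    show "X (g z) = z" if "X a < z" "z < X b" for z using Xg that by auto
    have "y \<in> interior {X a..X b}" using that by simp
    thus "isCont g y" using continuous_on_interior[OF gc] by blast
  qed
  have dq: "(qhl has_real_derivative dqhl y) (at y) \<and> (qhh has_real_derivative dqhh y) (at y)"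
    if "X a < y" "y < X b" for y
  proof -
    have o: "a < g y" "g y < b" using gopen that by auto
    have gyI: "g y \<in> I" using o unfolding I_def by auto
    have "DERIV A (g y) :> A1 (g y)" using dA gyI atI[OF o] unfolding I_def by metis
    from DERIV_chain2[OF this dg[OF that]]
    have 1: "(qhl has_real_derivative dqhl y) (at y)" unfolding qhl_def dqhl_def by (simp add: divide_inverse)
    have "DERIV B (g y) :> B1 (g y)" using dB gyI atI[OF o] unfolding I_def by metis
    from DERIV_chain2[OF this dg[OF that]]
    have 2: "(qhh has_real_derivative dqhh y) (at y)" unfolding qhh_def dqhh_def by (simp add: divide_inverse)
    show ?thesis using 1 2 by blast
  qed
  have Xa_ta: "X a < X ta" "X t1 < X b" "X ta \<le> X x0" "X x0 \<le> X t1" using mono mono_le aI tt by auto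
  have eq: "integral {ta..tb} (\<lambda>x. L (x, u x, v x, u1 x, v1 x)) =
            integral {X ta..X tb} (\<lambda>y. L (y, qhl y, qhh y, dqhl y, dqhh y))"
    if "ta \<le> tb" "tb \<le> t1" for tb
  proof -
    have tbI: "tb \<in> I" using that aI unfolding I_def by auto
    have le: "X ta \<le> X tb" "X tb \<le> X t1" using mono_le aI tbI that by auto
    have cs: "closed_segment (X ta) (X tb) = {X ta..X tb}" using le closed_segment_eq_real_ivl by auto
    have "integral {ta..tb} (\<lambda>x. L (x, u x, v x, u1 x, v1 x)) =
          oint (X ta) (X tb) (\<lambda>y. L (y, qhl y, qhh y, dqhl y, dqhh y))"
    proof (rule H[rule_format, OF conjI[OF that]], intro conjI ballI)
      fix x assume "x \<in> {a..b}"
      thus "qhl (X x) = A x" "qhh (X x) = B x" unfolding qhl_def qhh_def using gX I_def by auto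
    next
      fix y assume "y \<in> closed_segment (X ta) (X tb)"
      hence "X a < y" "y < X b" using cs le Xa_ta by auto
      thus "(qhl has_real_derivative dqhl y) (at y within closed_segment (X ta) (X tb))"
           "(qhh has_real_derivative dqhh y) (at y within closed_segment (X ta) (X tb))"
        using dq has_field_derivative_at_within by blast+
    qed
    thus ?thesis unfolding oint_def using le by simp
  qed
  define F0 where "F0 x = L (x, u x, v x, u1 x, v1 x)" for x
  define G where "G y = L (y, qhl y, qhh y, dqhl y, dqhh y)" for y
  have F0c: "continuous_on {ta..t1} F0"
  proof -
    have "continuous_on I F0" unfolding F0_def
      by (rule continuous_on_compose2[OF Lc]) (auto simp: I_def intro!: continuous_intros uc vc u1c v1c)
    thus ?thesis by (rule continuous_on_subset) (use aI in \<open>auto simp: I_def\<close>)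
  qed
  have sub: "{X ta..X t1} \<subseteq> {X a..X b}" using Xa_ta by auto
  have gc2: "continuous_on {X ta..X t1} g" using continuous_on_subset[OF gc sub] .
  have gI2: "g ` {X ta..X t1} \<subseteq> I" using gI sub by auto
  have X1g: "X1 (g y) \<noteq> 0" if "X ta \<le> y" "y \<le> X t1" for y
    using X1pos gI2 that unfolding I_def by (metis atLeastAtMost_iff image_subset_iff less_irrefl)
  have Gc: "continuous_on {X ta..X t1} G"
  proof -
    have c1: "continuous_on {X ta..X t1} (\<lambda>y. A (g y))" by (rule continuous_on_compose2[OF Ac gc2 gI2])
    have c2: "continuous_on {X ta..X t1} (\<lambda>y. B (g y))" by (rule continuous_on_compose2[OF Bc gc2 gI2])
    have c3: "continuous_on {X ta..X t1} (\<lambda>y. A1 (g y))" by (rule continuous_on_compose2[OF A1c[folded I_def] gc2 gI2])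
    have c4: "continuous_on {X ta..X t1} (\<lambda>y. B1 (g y))" by (rule continuous_on_compose2[OF B1c[folded I_def] gc2 gI2])
    have c5: "continuous_on {X ta..X t1} (\<lambda>y. X1 (g y))" by (rule continuous_on_compose2[OF X1c[folded I_def] gc2 gI2])
    have "continuous_on {X ta..X t1} (\<lambda>y. (y, qhl y, qhh y, dqhl y, dqhh y))"
      unfolding qhl_def qhh_def dqhl_def dqhh_def
      by (intro continuous_intros c1 c2 c3 c4 c5) (use X1g in auto)
    moreover have "(\<lambda>y. (y, qhl y, qhh y, dqhl y, dqhh y)) ` {X ta..X t1} \<subseteq> {a..b} \<times> UNIV"
      using Xin by auto
    ultimately show ?thesis unfolding G_def by (rule continuous_on_compose2[OF Lc])
  qed
  have x0i: "x0 \<in> {ta..t1}" using tt by auto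
  have d1: "((\<lambda>t. integral {ta..t} F0) has_real_derivative F0 x0) (at x0 within {ta..t1})"
    using integral_has_vector_derivative[OF F0c x0i] has_real_derivative_iff_has_vector_derivative by blast
  have Xx0: "X x0 \<in> {X ta..X t1}" using Xa_ta by auto
  have d2: "((\<lambda>s. integral {X ta..s} G) has_real_derivative G (X x0)) (at (X x0) within {X ta..X t1})"
    using integral_has_vector_derivative[OF Gc Xx0] has_real_derivative_iff_has_vector_derivative by blast
  have XS: "X ` {ta..t1} \<subseteq> {X ta..X t1}" using mono_le aI unfolding I_def by auto
  have dX0: "(X has_real_derivative X1 x0) (at x0 within {ta..t1})"
  proof (rule has_field_derivative_subset)
    show "(X has_real_derivative X1 x0) (at x0 within {a..b})" using dX aI unfolding I_def by blast
    show "{ta..t1} \<subseteq> {a..b}" using tt by auto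
  qed
  have d3: "((\<lambda>s. integral {X ta..s} G) \<circ> X has_real_derivative G (X x0) * X1 x0) (at x0 within {ta..t1})"
    by (rule DERIV_image_chain[OF has_field_derivative_subset[OF d2 XS] dX0])
  have d4: "((\<lambda>t. integral {ta..t} F0) has_real_derivative G (X x0) * X1 x0) (at x0 within {ta..t1})"
  proof (rule has_field_derivative_transform_within[OF d3 zero_less_one x0i])
    fix t assume "t \<in> {ta..t1}"
    thus "((\<lambda>s. integral {X ta..s} G) \<circ> X) t = integral {ta..t} F0"
      using eq[of t] unfolding F0_def G_def by auto
  qed
  have at0: "at x0 within {ta..t1} = at x0" using tt by (intro at_within_Icc_at) auto
  have "F0 x0 = G (X x0) * X1 x0" using DERIV_unique d1 d4 unfolding at0 by blast
  moreover have "G (X x0) = L (X x0, A x0, B x0, A1 x0 / X1 x0, B1 x0 / X1 x0)"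
    unfolding G_def qhl_def qhh_def dqhl_def dqhh_def using gX aI by simp
  ultimately show ?thesis unfolding F0_def by simp
qed


lemma rem0:
  fixes f :: "real \<Rightarrow> real"
  assumes h: "\<forall>\<epsilon>>0. \<exists>d>0. \<forall>e. 0 < e \<and> e < d \<longrightarrow> \<bar>f e\<bar> \<le> \<epsilon> * e" and f0: "f 0 = 0"
  shows "(f has_real_derivative 0) (at 0 within {0..})"
  unfolding has_field_derivative_iff at_within_Ici_at_right
proof (rule tendstoI)
  fix \<epsilon> :: real assume "\<epsilon> > 0"
  then obtain d where d: "d > 0" "\<forall>e. 0 < e \<and> e < d \<longrightarrow> \<bar>f e\<bar> \<le> \<epsilon>/2 * e"
    using h[rule_format, of "\<epsilon>/2"] by auto
  show "\<forall>\<^sub>F y in at_right 0. dist ((f y - f 0) / (y - 0)) 0 < \<epsilon>"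
    using eventually_at_right_real[OF d(1)]
  proof (rule eventually_mono)
    fix y assume y: "y \<in> {0<..<d}"
    hence "\<bar>f y\<bar> \<le> \<epsilon>/2 * y" using d by auto
    hence "\<bar>f y\<bar> / y \<le> \<epsilon>/2" using y by (simp add: divide_le_eq mult.commute)
    moreover have "dist ((f y - f 0) / (y - 0)) 0 = \<bar>f y\<bar> / y" using y f0 by (simp add: dist_real_def abs_divide)
    ultimately show "dist ((f y - f 0) / (y - 0)) 0 < \<epsilon>" using \<open>\<epsilon> > 0\<close> by linarith
  qed
qed

lemma const0:
  fixes f :: "real \<Rightarrow> real"
  assumes df: "(f has_real_derivative D) (at 0 within {0..})"
    and c: "\<exists>d>0. \<forall>e. 0 < e \<and> e < d \<longrightarrow> f e = f 0"
  shows "D = 0"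
proof -
  have t1: "((\<lambda>y. (f y - f 0) / (y - 0)) \<longlongrightarrow> D) (at_right 0)"
    using df unfolding has_field_derivative_iff at_within_Ici_at_right .
  obtain d where d: "d > 0" "\<forall>e. 0 < e \<and> e < d \<longrightarrow> f e = f 0" using c by blast
  have ev: "\<forall>\<^sub>F y in at_right 0. 0 = (f y - f 0) / (y - 0)"
    using eventually_at_right_real[OF d(1)] by (rule eventually_mono) (use d in auto)
  have t2: "((\<lambda>y. (f y - f 0) / (y - 0)) \<longlongrightarrow> 0) (at_right 0)"
    using tendsto_cong[OF ev] tendsto_const by blast
  show ?thesis using tendsto_unique[OF _ t1 t2] by simp
qed

lemma chain_at:
  assumes "(g has_derivative blinfun_apply G) (at (p t))"
    and "(p has_vector_derivative p') (at t within s)"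
  shows "((\<lambda>x. g (p x)) has_real_derivative G p') (at t within s)"
proof -
  have "((\<lambda>x. g (p x)) has_derivative (\<lambda>h. G (h *\<^sub>R p'))) (at t within s)"
    using has_derivative_compose[OF assms(2)[unfolded has_vector_derivative_def] assms(1)] .
  moreover have "(\<lambda>h. G (h *\<^sub>R p')) = (*) (G p')"
    by (rule ext) (simp add: blinfun.scaleR_right)
  ultimately show ?thesis unfolding has_field_derivative_def by simp
qed

lemma cont_bound:
  fixes f :: "real \<Rightarrow> real"
  assumes "continuous_on {a..b} f"
  obtains M where "M \<ge> 0" "\<forall>t\<in>{a..b}. \<bar>f t\<bar> \<le> M"
proof -
  have "bounded (f ` {a..b})" using compact_continuous_image[OF assms] compact_imp_bounded by blast
  then obtain M where "\<forall>x\<in>f ` {a..b}. \<bar>x\<bar> \<le> M" unfolding bounded_real by blast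
  hence "\<forall>t\<in>{a..b}. \<bar>f t\<bar> \<le> max M 0" by auto
  thus ?thesis using that[of "max M 0"] by auto
qed


lemma infinv:
  fixes L :: "R5 \<Rightarrow> real" and L' :: "R5 \<Rightarrow> R5 \<Rightarrow>\<^sub>L real"
    and u v u1 v1 T T1 Zl Zl1 Zh Zh1 :: "real \<Rightarrow> real" and Rx Rl Rh :: "real \<Rightarrow> real \<Rightarrow> real"
  assumes ab: "a < b"
    and Lc: "continuous_on ({a..b} \<times> UNIV) L"
    and Ld: "\<forall>p\<in>{a..b} \<times> UNIV. (L has_derivative blinfun_apply (L' p)) (at p within {a..b} \<times> UNIV)"
    and du: "\<forall>t\<in>{a..b}. (u has_real_derivative u1 t) (at t within {a..b})" and u1c: "continuous_on {a..b} u1"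
    and dv: "\<forall>t\<in>{a..b}. (v has_real_derivative v1 t) (at t within {a..b})" and v1c: "continuous_on {a..b} v1"
    and dT: "\<forall>t\<in>{a..b}. (T has_real_derivative T1 t) (at t within {a..b})" and T1c: "continuous_on {a..b} T1"
    and dZl: "\<forall>t\<in>{a..b}. (Zl has_real_derivative Zl1 t) (at t within {a..b})" and Zl1c: "continuous_on {a..b} Zl1"
    and dZh: "\<forall>t\<in>{a..b}. (Zh has_real_derivative Zh1 t) (at t within {a..b})" and Zh1c: "continuous_on {a..b} Zh1"
    and sx: "small_remainder a b Rx" and sl: "small_remainder a b Rl" and sh: "small_remainder a b Rh"
    and inv: "\<forall>ta tb \<epsilon>. a \<le> ta \<and> ta \<le> tb \<and> tb \<le> b \<and> 0 < \<epsilon> \<longrightarrow>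
       (let X = (\<lambda>x. x + \<epsilon> * T x + Rx \<epsilon> x) in
        \<forall>qhl qhh dqhl dqhh.
          (\<forall>x\<in>{a..b}. qhl (X x) = u x + \<epsilon> * Zl x + Rl \<epsilon> x
                    \<and> qhh (X x) = v x + \<epsilon> * Zh x + Rh \<epsilon> x) \<and>
          (\<forall>y\<in>closed_segment (X ta) (X tb).
              (qhl has_real_derivative dqhl y) (at y within closed_segment (X ta) (X tb)) \<and>
              (qhh has_real_derivative dqhh y) (at y within closed_segment (X ta) (X tb)))
          \<longrightarrow>
          integral {ta..tb} (\<lambda>x. L (x, u x, v x, u1 x, v1 x))
          = oint (X ta) (X tb) (\<lambda>y. L (y, qhl y, qhh y, dqhl y, dqhh y)))"
    and x0: "a < x0" "x0 < b"
  shows "L' (x0, u x0, v x0, u1 x0, v1 x0) (T x0, Zl x0, Zh x0, Zl1 x0 - u1 x0 * T1 x0, Zh1 x0 - v1 x0 * T1 x0)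
         + L (x0, u x0, v x0, u1 x0, v1 x0) * T1 x0 = 0"
proof -
  define I where "I = {a..b}"
  have x0I: "x0 \<in> I" using x0 unfolding I_def by auto
  have uc: "continuous_on {a..b} u" using du by (intro DERIV_continuous_on) auto
  have vc: "continuous_on {a..b} v" using dv by (intro DERIV_continuous_on) auto
  have Tc: "continuous_on {a..b} T" using dT by (intro DERIV_continuous_on) auto
  obtain M0 where M0: "M0 \<ge> 0" "\<forall>t\<in>{a..b}. \<bar>T t\<bar> \<le> M0" using cont_bound[OF Tc] by blast
  obtain M1 where M1: "M1 \<ge> 0" "\<forall>t\<in>{a..b}. \<bar>T1 t\<bar> \<le> M1" using cont_bound[OF T1c] by blast
  define D where "D R \<epsilon> t = vector_derivative (R \<epsilon>) (at t within {a..b})" for R :: "real \<Rightarrow> real \<Rightarrow> real" and \<epsilon> t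
  have Rd: "\<forall>t\<in>{a..b}. (R \<epsilon> has_real_derivative D R \<epsilon> t) (at t within {a..b})"
     "continuous_on {a..b} (D R \<epsilon>)" if "small_remainder a b R" "\<epsilon> > 0" for R \<epsilon>
  proof -
    have "C1_within {a..b} (R \<epsilon>)" using that unfolding small_remainder_def by blast
    from C1_real[OF ab this] show "\<forall>t\<in>{a..b}. (R \<epsilon> has_real_derivative D R \<epsilon> t) (at t within {a..b})"
       "continuous_on {a..b} (D R \<epsilon>)" unfolding D_def by auto
  qed
  define ta where "ta = (a + x0) / 2"
  define t1 where "t1 = (x0 + b) / 2"
  define \<delta> where "\<delta> = min (ta - a) (b - t1)"
  have tt0: "a < ta" "ta < x0" "x0 < t1" "t1 < b"
    using x0 unfolding ta_def t1_def by auto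
  have tt: "a < ta" "ta < x0" "x0 < t1" "t1 < b" "\<delta> > 0" "\<delta> \<le> ta - a" "\<delta> \<le> b - t1"
    using tt0 unfolding \<delta>_def by auto
  obtain dx where dx: "dx > 0" "\<forall>\<epsilon>. 0 < \<epsilon> \<and> \<epsilon> < dx \<longrightarrow>
        (\<forall>x\<in>{a..b}. \<bar>Rx \<epsilon> x\<bar> \<le> 1/4 * \<epsilon> \<and> \<bar>D Rx \<epsilon> x\<bar> \<le> 1/4 * \<epsilon>)"
    using sx unfolding small_remainder_def D_def by (metis zero_less_divide_1_iff zero_less_numeral)
  define \<epsilon>0 where "\<epsilon>0 = min dx (min (1/(4*(M1+1))) (\<delta>/(2*(M0+1))))"
  have e0: "\<epsilon>0 > 0" using dx tt M0 M1 unfolding \<epsilon>0_def by auto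
  define zz where "zz = (x0, u x0, v x0, u1 x0, v1 x0)"
  have star: "L zz = L (x0 + \<epsilon> * T x0 + Rx \<epsilon> x0, u x0 + \<epsilon> * Zl x0 + Rl \<epsilon> x0, v x0 + \<epsilon> * Zh x0 + Rh \<epsilon> x0,
       (u1 x0 + \<epsilon> * Zl1 x0 + D Rl \<epsilon> x0) / (1 + \<epsilon> * T1 x0 + D Rx \<epsilon> x0),
       (v1 x0 + \<epsilon> * Zh1 x0 + D Rh \<epsilon> x0) / (1 + \<epsilon> * T1 x0 + D Rx \<epsilon> x0)) * (1 + \<epsilon> * T1 x0 + D Rx \<epsilon> x0)"
    if e: "0 < \<epsilon>" "\<epsilon> < \<epsilon>0" for \<epsilon>
  proof -
    define X where "X t = t + \<epsilon> * T t + Rx \<epsilon> t" for t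
    define X1 where "X1 t = 1 + \<epsilon> * T1 t + D Rx \<epsilon> t" for t
    define A where "A t = u t + \<epsilon> * Zl t + Rl \<epsilon> t" for t
    define A1 where "A1 t = u1 t + \<epsilon> * Zl1 t + D Rl \<epsilon> t" for t
    define B where "B t = v t + \<epsilon> * Zh t + Rh \<epsilon> t" for t
    define B1 where "B1 t = v1 t + \<epsilon> * Zh1 t + D Rh \<epsilon> t" for t
    have edx: "\<epsilon> < dx" and eM1: "\<epsilon> < 1/(4*(M1+1))" and eM0: "\<epsilon> < \<delta>/(2*(M0+1))"
      using e unfolding \<epsilon>0_def by auto
    have eM1': "\<epsilon> * (M1 + 1) < 1/4" using eM1 M1 by (simp add: field_simps)
    have eM0': "\<epsilon> * (M0 + 1) < \<delta>/2" using eM0 M0 by (simp add: field_simps)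
    have Rb: "\<bar>Rx \<epsilon> t\<bar> \<le> 1/4 * \<epsilon> \<and> \<bar>D Rx \<epsilon> t\<bar> \<le> 1/4 * \<epsilon>" if "t \<in> {a..b}" for t
      using dx(2) e edx that by blast
    have Tb: "\<bar>\<epsilon> * T t\<bar> \<le> \<epsilon> * M0" if "t \<in> {a..b}" for t
      using M0 that e by (simp add: abs_mult mult_left_mono)
    have T1b: "\<bar>\<epsilon> * T1 t\<bar> \<le> \<epsilon> * M1" if "t \<in> {a..b}" for t
      using M1 that e by (simp add: abs_mult mult_left_mono)
    have X1pos: "\<forall>t\<in>{a..b}. X1 t > 0"
    proof
      fix t assume t: "t \<in> {a..b}"
      have "\<epsilon> * (M1 + 1) = \<epsilon> * M1 + \<epsilon>" by (simp add: algebra_simps)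
      thus "X1 t > 0" using Rb[OF t] T1b[OF t] eM1' e unfolding X1_def by linarith
    qed
    have Xin: "a \<le> X ta" "X t1 \<le> b"
    proof -
      have "\<epsilon> * (M0 + 1) = \<epsilon> * M0 + \<epsilon>" by (simp add: algebra_simps)
      moreover have "ta \<in> {a..b}" "t1 \<in> {a..b}" using tt by auto
      moreover have "- (\<epsilon> * M0) \<le> \<epsilon> * T ta" "\<epsilon> * T t1 \<le> \<epsilon> * M0"
        using Tb[of ta] Tb[of t1] tt by (auto simp: abs_le_iff)
      moreover have "- (1/4 * \<epsilon>) \<le> Rx \<epsilon> ta" "Rx \<epsilon> t1 \<le> 1/4 * \<epsilon>"
        using Rb[of ta] Rb[of t1] tt by (auto simp: abs_le_iff)
      ultimately show "a \<le> X ta" "X t1 \<le> b" using eM0' e tt unfolding X_def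
        by linarith+
    qed
    have dX: "\<forall>t\<in>{a..b}. (X has_real_derivative X1 t) (at t within {a..b})"
    proof
      fix t assume t: "t \<in> {a..b}"
      show "(X has_real_derivative X1 t) (at t within {a..b})"
        unfolding X_def X1_def
        by (rule DERIV_add[OF DERIV_add[OF DERIV_ident DERIV_cmult[OF dT[rule_format, OF t]]] Rd(1)[OF sx e(1), rule_format, OF t]])
    qed
    have dA: "\<forall>t\<in>{a..b}. (A has_real_derivative A1 t) (at t within {a..b})"
    proof
      fix t assume t: "t \<in> {a..b}"
      show "(A has_real_derivative A1 t) (at t within {a..b})"
        unfolding A_def A1_def
        by (rule DERIV_add[OF DERIV_add[OF du[rule_format, OF t] DERIV_cmult[OF dZl[rule_format, OF t]]] Rd(1)[OF sl e(1), rule_format, OF t]])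
    qed
    have dB: "\<forall>t\<in>{a..b}. (B has_real_derivative B1 t) (at t within {a..b})"
    proof
      fix t assume t: "t \<in> {a..b}"
      show "(B has_real_derivative B1 t) (at t within {a..b})"
        unfolding B_def B1_def
        by (rule DERIV_add[OF DERIV_add[OF dv[rule_format, OF t] DERIV_cmult[OF dZh[rule_format, OF t]]] Rd(1)[OF sh e(1), rule_format, OF t]])
    qed
    have X1c: "continuous_on {a..b} X1" unfolding X1_def
      using T1c Rd(2)[OF sx e(1)] by (intro continuous_intros) auto
    have A1c: "continuous_on {a..b} A1" unfolding A1_def
      using u1c Zl1c Rd(2)[OF sl e(1)] by (intro continuous_intros) auto
    have B1c: "continuous_on {a..b} B1" unfolding B1_def
      using v1c Zh1c Rd(2)[OF sh e(1)] by (intro continuous_intros) auto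
    have H: "\<forall>tb. ta \<le> tb \<and> tb \<le> t1 \<longrightarrow> (\<forall>qhl qhh dqhl dqhh.
          (\<forall>x\<in>{a..b}. qhl (X x) = A x \<and> qhh (X x) = B x) \<and>
          (\<forall>y\<in>closed_segment (X ta) (X tb).
              (qhl has_real_derivative dqhl y) (at y within closed_segment (X ta) (X tb)) \<and>
              (qhh has_real_derivative dqhh y) (at y within closed_segment (X ta) (X tb)))
          \<longrightarrow> integral {ta..tb} (\<lambda>x. L (x, u x, v x, u1 x, v1 x))
              = oint (X ta) (X tb) (\<lambda>y. L (y, qhl y, qhh y, dqhl y, dqhh y)))"
    proof (intro allI impI)
      fix tb qhl qhh dqhl dqhh assume tb: "ta \<le> tb \<and> tb \<le> t1"
      have "a \<le> ta \<and> ta \<le> tb \<and> tb \<le> b \<and> 0 < \<epsilon>" using tb tt e by auto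
      from inv[rule_format, OF this]
      show "(\<forall>x\<in>{a..b}. qhl (X x) = A x \<and> qhh (X x) = B x) \<and>
          (\<forall>y\<in>closed_segment (X ta) (X tb).
              (qhl has_real_derivative dqhl y) (at y within closed_segment (X ta) (X tb)) \<and>
              (qhh has_real_derivative dqhh y) (at y within closed_segment (X ta) (X tb)))
          \<Longrightarrow> integral {ta..tb} (\<lambda>x. L (x, u x, v x, u1 x, v1 x))
              = oint (X ta) (X tb) (\<lambda>y. L (y, qhl y, qhh y, dqhl y, dqhh y))"
        unfolding Let_def X_def[symmetric] A_def[symmetric] B_def[symmetric] by blast
    qed
    have "L (x0, u x0, v x0, u1 x0, v1 x0) = L (X x0, A x0, B x0, A1 x0 / X1 x0, B1 x0 / X1 x0) * X1 x0"
      by (rule pw[OF ab Lc _ _ u1c v1c dX X1c X1pos dA A1c dB B1c tt(1-4) Xin H])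
         (use uc vc in auto)
    thus ?thesis unfolding zz_def X_def X1_def A_def A1_def B_def B1_def .
  qed
  have r0: "((\<lambda>e. if e > 0 then R e x0 else 0) has_real_derivative 0) (at 0 within {0..})"
          "((\<lambda>e. if e > 0 then D R e x0 else 0) has_real_derivative 0) (at 0 within {0..})"
    if sR: "small_remainder a b R" for R
  proof -
    have x0i: "x0 \<in> {a..b}" using x0 by auto
    have h: "\<forall>\<epsilon>>0. \<exists>d>0. \<forall>e. 0 < e \<and> e < d \<longrightarrow> \<bar>R e x0\<bar> \<le> \<epsilon> * e \<and> \<bar>D R e x0\<bar> \<le> \<epsilon> * e"
    proof (intro allI impI)
      fix \<epsilon> :: real assume "\<epsilon> > 0"
      then obtain d where d: "d > 0" "\<forall>e. 0 < e \<and> e < d \<longrightarrow> (\<forall>x\<in>{a..b}. \<bar>R e x\<bar> \<le> \<epsilon> * e \<and> \<bar>D R e x\<bar> \<le> \<epsilon> * e)"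
        using sR unfolding small_remainder_def D_def by blast
      show "\<exists>d>0. \<forall>e. 0 < e \<and> e < d \<longrightarrow> \<bar>R e x0\<bar> \<le> \<epsilon> * e \<and> \<bar>D R e x0\<bar> \<le> \<epsilon> * e"
        using d x0i by blast
    qed
    show "((\<lambda>e. if e > 0 then R e x0 else 0) has_real_derivative 0) (at 0 within {0..})"
    proof (rule rem0)
      show "\<forall>\<epsilon>>0. \<exists>d>0. \<forall>e. 0 < e \<and> e < d \<longrightarrow> \<bar>if e > 0 then R e x0 else 0\<bar> \<le> \<epsilon> * e"
      proof (intro allI impI)
        fix \<epsilon> :: real assume "\<epsilon> > 0"
        then obtain d where "d > 0" "\<forall>e. 0 < e \<and> e < d \<longrightarrow> \<bar>R e x0\<bar> \<le> \<epsilon> * e" using h by blast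
        thus "\<exists>d>0. \<forall>e. 0 < e \<and> e < d \<longrightarrow> \<bar>if e > 0 then R e x0 else 0\<bar> \<le> \<epsilon> * e" by auto
      qed
    qed simp
    show "((\<lambda>e. if e > 0 then D R e x0 else 0) has_real_derivative 0) (at 0 within {0..})"
    proof (rule rem0)
      show "\<forall>\<epsilon>>0. \<exists>d>0. \<forall>e. 0 < e \<and> e < d \<longrightarrow> \<bar>if e > 0 then D R e x0 else 0\<bar> \<le> \<epsilon> * e"
      proof (intro allI impI)
        fix \<epsilon> :: real assume "\<epsilon> > 0"
        then obtain d where "d > 0" "\<forall>e. 0 < e \<and> e < d \<longrightarrow> \<bar>D R e x0\<bar> \<le> \<epsilon> * e" using h by blast
        thus "\<exists>d>0. \<forall>e. 0 < e \<and> e < d \<longrightarrow> \<bar>if e > 0 then D R e x0 else 0\<bar> \<le> \<epsilon> * e" by auto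
      qed
    qed simp
  qed
  define rx where "rx e = (if e > 0 then Rx e x0 else 0)" for e
  define rl where "rl e = (if e > 0 then Rl e x0 else 0)" for e
  define rh where "rh e = (if e > 0 then Rh e x0 else 0)" for e
  define rx' where "rx' e = (if e > 0 then D Rx e x0 else 0)" for e
  define rl' where "rl' e = (if e > 0 then D Rl e x0 else 0)" for e
  define rh' where "rh' e = (if e > 0 then D Rh e x0 else 0)" for e
  have drx: "(rx has_real_derivative 0) (at 0 within {0..})" "(rx' has_real_derivative 0) (at 0 within {0..})"
    using r0[OF sx] unfolding rx_def rx'_def by auto
  have drl: "(rl has_real_derivative 0) (at 0 within {0..})" "(rl' has_real_derivative 0) (at 0 within {0..})"
    using r0[OF sl] unfolding rl_def rl'_def by auto
  have drh: "(rh has_real_derivative 0) (at 0 within {0..})" "(rh' has_real_derivative 0) (at 0 within {0..})"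
    using r0[OF sh] unfolding rh_def rh'_def by auto
  define P where "P e = (x0 + e * T x0 + rx e, u x0 + e * Zl x0 + rl e, v x0 + e * Zh x0 + rh e,
       (u1 x0 + e * Zl1 x0 + rl' e) / (1 + e * T1 x0 + rx' e),
       (v1 x0 + e * Zh1 x0 + rh' e) / (1 + e * T1 x0 + rx' e))" for e
  define Pv where "Pv = (T x0, Zl x0, Zh x0, Zl1 x0 - u1 x0 * T1 x0, Zh1 x0 - v1 x0 * T1 x0)"
  have P0: "P 0 = zz" unfolding P_def zz_def rx_def rl_def rh_def rx'_def rl'_def rh'_def by simp
  have c1: "((\<lambda>e. x0 + e * T x0 + rx e) has_real_derivative T x0) (at 0 within {0..})"
    by (rule derivative_eq_intros drx | simp)+
  have c2: "((\<lambda>e. u x0 + e * Zl x0 + rl e) has_real_derivative Zl x0) (at 0 within {0..})"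
    by (rule derivative_eq_intros drl | simp)+
  have c3: "((\<lambda>e. v x0 + e * Zh x0 + rh e) has_real_derivative Zh x0) (at 0 within {0..})"
    by (rule derivative_eq_intros drh | simp)+
  have rx'0: "rx' 0 = 0" "rl' 0 = 0" "rh' 0 = 0" unfolding rx'_def rl'_def rh'_def by auto
  have c4: "((\<lambda>e. (u1 x0 + e * Zl1 x0 + rl' e) / (1 + e * T1 x0 + rx' e)) has_real_derivative
             Zl1 x0 - u1 x0 * T1 x0) (at 0 within {0..})"
    by (rule derivative_eq_intros drl drx | simp add: rx'0)+
  have c5: "((\<lambda>e. (v1 x0 + e * Zh1 x0 + rh' e) / (1 + e * T1 x0 + rx' e)) has_real_derivative
             Zh1 x0 - v1 x0 * T1 x0) (at 0 within {0..})"
    by (rule derivative_eq_intros drh drx | simp add: rx'0)+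
  have dP: "(P has_vector_derivative Pv) (at 0 within {0..})"
    unfolding P_def Pv_def
    by (intro has_vector_derivative_Pair c1[unfolded has_real_derivative_iff_has_vector_derivative]
        c2[unfolded has_real_derivative_iff_has_vector_derivative]
        c3[unfolded has_real_derivative_iff_has_vector_derivative]
        c4[unfolded has_real_derivative_iff_has_vector_derivative]
        c5[unfolded has_real_derivative_iff_has_vector_derivative])
  have zzS: "zz \<in> interior ({a..b} \<times> UNIV)" using x0 unfolding zz_def interior_Times by auto
  have LD: "(L has_derivative blinfun_apply (L' (P 0))) (at (P 0))"
    using Ld zzS at_within_interior[OF zzS] interior_subset unfolding P0 by (metis subsetD)
  have dLP: "((\<lambda>e. L (P e)) has_real_derivative L' zz Pv) (at 0 within {0..})"
    using chain_at[OF LD dP] unfolding P0 .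
  define \<Phi> where "\<Phi> e = L (P e) * (1 + e * T1 x0 + rx' e)" for e
  have dPhi: "(\<Phi> has_real_derivative L' zz Pv + L zz * T1 x0) (at 0 within {0..})"
    unfolding \<Phi>_def by (rule derivative_eq_intros dLP drx | simp add: rx'0 P0)+
  have "\<exists>d>0. \<forall>e. 0 < e \<and> e < d \<longrightarrow> \<Phi> e = \<Phi> 0"
  proof (intro exI[of _ \<epsilon>0] conjI allI impI e0)
    fix e assume "0 < e \<and> e < \<epsilon>0"
    hence "L zz = \<Phi> e" using star[of e] unfolding \<Phi>_def P_def rx_def rl_def rh_def rx'_def rl'_def rh'_def by auto
    moreover have "\<Phi> 0 = L zz" unfolding \<Phi>_def P0 using rx'0 by simp
    ultimately show "\<Phi> e = \<Phi> 0" by simp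
  qed
  from const0[OF dPhi this] show ?thesis unfolding zz_def Pv_def .
qed


lemma chain_within:
  assumes "(g has_derivative blinfun_apply G) (at (p t) within S)"
    and "p ` s \<subseteq> S"
    and "(p has_vector_derivative p') (at t within s)"
  shows "((\<lambda>x. g (p x)) has_real_derivative G p') (at t within s)"
proof -
  have "((\<lambda>x. g (p x)) has_derivative (\<lambda>h. G (h *\<^sub>R p'))) (at t within s)"
    using has_derivative_in_compose[OF assms(3)[unfolded has_vector_derivative_def]
        has_derivative_subset[OF assms(1) assms(2)]] .
  moreover have "(\<lambda>h. G (h *\<^sub>R p')) = (*) (G p')"
    by (rule ext) (simp add: blinfun.scaleR_right)
  ultimately show ?thesis unfolding has_field_derivative_def by simp
qed

lemma C2_real:
  fixes f :: "real \<Rightarrow> real"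
  assumes ab: "a < b" and C: "C2_within {a..b} f"
  shows "C1_within {a..b} f"
    and "\<forall>t\<in>{a..b}. \<exists>D. ((\<lambda>t. vector_derivative f (at t within {a..b})) has_real_derivative D) (at t within {a..b})"
proof -
  obtain f' where d: "\<forall>z\<in>{a..b}. (f has_derivative blinfun_apply (f' z)) (at z within {a..b})"
    and c1: "C1_within {a..b} f'" using C unfolding C2_within_def by blast
  obtain f'' where d2: "\<forall>z\<in>{a..b}. (f' has_derivative blinfun_apply (f'' z)) (at z within {a..b})"
    using c1 unfolding C1_within_def by blast
  have f'c: "continuous_on {a..b} f'" using d2 by (intro has_derivative_continuous_on) auto
  show "C1_within {a..b} f" unfolding C1_within_def using d f'c by blast
  have dd: "(f has_real_derivative f' z 1) (at z within {a..b})" if "z \<in> {a..b}" for z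
    using d that has_real_from_blin by blast
  have vd: "vector_derivative f (at z within {a..b}) = f' z 1" if "z \<in> {a..b}" for z
    using vector_derivative_within_cbox[of a b z f "f' z 1"] ab that dd[OF that]
    unfolding has_real_derivative_iff_has_vector_derivative cbox_interval by blast
  show "\<forall>t\<in>{a..b}. \<exists>D. ((\<lambda>t. vector_derivative f (at t within {a..b})) has_real_derivative D) (at t within {a..b})"
  proof
    fix t assume t: "t \<in> {a..b}"
    have "((\<lambda>x. blinfun_apply (f' x) 1) has_derivative
           (\<lambda>h. blinfun_apply (f' t) 0 + blinfun_apply (f'' t h) 1)) (at t within {a..b})"
      by (rule blinfun.FDERIV[OF d2[rule_format, OF t] has_derivative_const])
    hence "(\<lambda>x. blinfun_apply (f' x) 1) differentiable (at t within {a..b})"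
      unfolding differentiable_def by blast
    then obtain D where D: "((\<lambda>x. blinfun_apply (f' x) 1) has_real_derivative D) (at t within {a..b})"
      unfolding real_differentiable_def by blast
    have "((\<lambda>t. vector_derivative f (at t within {a..b})) has_real_derivative D) (at t within {a..b})"
      by (rule has_field_derivative_transform_within[OF D zero_less_one t]) (simp add: vd)
    thus "\<exists>D. ((\<lambda>t. vector_derivative f (at t within {a..b})) has_real_derivative D) (at t within {a..b})" by blast
  qed
qed

lemma comp3:
  fixes g :: "R3 \<Rightarrow> real" and u v u1 v1 :: "real \<Rightarrow> real"
  assumes ab: "a < b" and gC: "C1_within ({a..b} \<times> UNIV) g"
    and du: "\<forall>t\<in>{a..b}. (u has_real_derivative u1 t) (at t within {a..b})" and u1c: "continuous_on {a..b} u1"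
    and dv: "\<forall>t\<in>{a..b}. (v has_real_derivative v1 t) (at t within {a..b})" and v1c: "continuous_on {a..b} v1"
  shows "\<forall>t\<in>{a..b}. ((\<lambda>t. g (t, u t, v t)) has_real_derivative dotx a b (\<lambda>t. g (t, u t, v t)) t) (at t within {a..b})"
    and "continuous_on {a..b} (dotx a b (\<lambda>t. g (t, u t, v t)))"
proof -
  obtain G where dG: "\<forall>z\<in>{a..b} \<times> UNIV. (g has_derivative blinfun_apply (G z)) (at z within {a..b} \<times> UNIV)"
    and Gc: "continuous_on ({a..b} \<times> UNIV) G" using gC unfolding C1_within_def by blast
  have uc: "continuous_on {a..b} u" using du by (intro DERIV_continuous_on) auto
  have vc: "continuous_on {a..b} v" using dv by (intro DERIV_continuous_on) auto
  define p where "p t = (t, u t, v t)" for t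
  have pS: "p ` {a..b} \<subseteq> {a..b} \<times> UNIV" unfolding p_def by auto
  have dp: "(p has_vector_derivative (1, u1 t, v1 t)) (at t within {a..b})" if "t \<in> {a..b}" for t
    unfolding p_def
    by (intro has_vector_derivative_Pair has_vector_derivative_id
        du[rule_format, OF that, unfolded has_real_derivative_iff_has_vector_derivative]
        dv[rule_format, OF that, unfolded has_real_derivative_iff_has_vector_derivative])
  have dd: "((\<lambda>t. g (p t)) has_real_derivative G (p t) (1, u1 t, v1 t)) (at t within {a..b})"
    if "t \<in> {a..b}" for t
    by (rule chain_within[OF dG[rule_format] pS dp[OF that]]) (use that pS in auto)
  have vd: "dotx a b (\<lambda>t. g (t, u t, v t)) t = G (p t) (1, u1 t, v1 t)" if "t \<in> {a..b}" for t
    using vector_derivative_within_cbox[of a b t "\<lambda>t. g (p t)" "G (p t) (1, u1 t, v1 t)"] ab that dd[OF that]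
    unfolding has_real_derivative_iff_has_vector_derivative cbox_interval dotx_def p_def by blast
  show "\<forall>t\<in>{a..b}. ((\<lambda>t. g (t, u t, v t)) has_real_derivative dotx a b (\<lambda>t. g (t, u t, v t)) t) (at t within {a..b})"
    using dd vd unfolding p_def by simp
  have pc: "continuous_on {a..b} p" unfolding p_def by (intro continuous_intros uc vc)
  have "continuous_on {a..b} (\<lambda>t. G (p t) (1, u1 t, v1 t))"
    by (intro blinfun.continuous_on continuous_on_compose2[OF Gc pc pS] continuous_intros u1c v1c)
  thus "continuous_on {a..b} (dotx a b (\<lambda>t. g (t, u t, v t)))"
    using vd continuous_on_eq by fastforce
qed

lemma lin5:
  fixes G :: "R5 \<Rightarrow>\<^sub>L real"
  shows "G (a1, a2, a3, a4, a5) = a1 * G (1,0,0,0,0) + a2 * G (0,1,0,0,0) + a3 * G (0,0,1,0,0)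
           + a4 * G (0,0,0,1,0) + a5 * G (0,0,0,0,1)"
proof -
  have "(a1, a2, a3, a4, a5) = a1 *\<^sub>R (1,0,0,0,0) + a2 *\<^sub>R (0,1,0,0,0) + a3 *\<^sub>R (0,0,1,0,0)
           + a4 *\<^sub>R (0,0,0,1,0) + a5 *\<^sub>R (0,0,0,0,1::real)" by simp
  hence "G (a1, a2, a3, a4, a5) = G (a1 *\<^sub>R (1,0,0,0,0) + a2 *\<^sub>R (0,1,0,0,0) + a3 *\<^sub>R (0,0,1,0,0)
           + a4 *\<^sub>R (0,0,0,1,0) + a5 *\<^sub>R (0,0,0,0,1::real))" by simp
  also have "\<dots> = a1 * G (1,0,0,0,0) + a2 * G (0,1,0,0,0) + a3 * G (0,0,1,0,0)
           + a4 * G (0,0,0,1,0) + a5 * G (0,0,0,0,1)"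
    by (simp only: blinfun.add_right blinfun.scaleR_right real_scaleR_def)
  finally show ?thesis .
qed

lemma pd_lemma:
  fixes L :: "R5 \<Rightarrow> real" and G :: "R5 \<Rightarrow>\<^sub>L real"
  assumes dL: "(L has_derivative blinfun_apply G) (at p within {a..b} \<times> UNIV)" and p: "p \<in> {a..b} \<times> UNIV"
  shows "pd2 L p = G (0,1,0,0,0)" "pd3 L p = G (0,0,1,0,0)" "pd4 L p = G (0,0,0,1,0)" "pd5 L p = G (0,0,0,0,1)"
proof -
  obtain x y1 y2 y3 y4 where pe: "p = (x, y1, y2, y3, y4)" by (cases p) auto
  have x: "x \<in> {a..b}" using p pe by auto
  have "((\<lambda>s. L (x, s, y2, y3, y4)) has_real_derivative G (0,1,0,0,0)) (at y1 within UNIV)"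
    by (rule chain_within[where p="\<lambda>s. (x, s, y2, y3, y4)", OF dL[unfolded pe]])
       (use x in \<open>auto intro!: derivative_eq_intros simp: zero_prod_def\<close>)
  thus "pd2 L p = G (0,1,0,0,0)" unfolding pd2_def pe by (simp add: DERIV_imp_deriv)
  have "((\<lambda>s. L (x, y1, s, y3, y4)) has_real_derivative G (0,0,1,0,0)) (at y2 within UNIV)"
    by (rule chain_within[where p="\<lambda>s. (x, y1, s, y3, y4)", OF dL[unfolded pe]])
       (use x in \<open>auto intro!: derivative_eq_intros simp: zero_prod_def\<close>)
  thus "pd3 L p = G (0,0,1,0,0)" unfolding pd3_def pe by (simp add: DERIV_imp_deriv)
  have "((\<lambda>s. L (x, y1, y2, s, y4)) has_real_derivative G (0,0,0,1,0)) (at y3 within UNIV)"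
    by (rule chain_within[where p="\<lambda>s. (x, y1, y2, s, y4)", OF dL[unfolded pe]])
       (use x in \<open>auto intro!: derivative_eq_intros simp: zero_prod_def\<close>)
  thus "pd4 L p = G (0,0,0,1,0)" unfolding pd4_def pe by (simp add: DERIV_imp_deriv)
  have "((\<lambda>s. L (x, y1, y2, y3, s)) has_real_derivative G (0,0,0,0,1)) (at y4 within UNIV)"
    by (rule chain_within[where p="\<lambda>s. (x, y1, y2, y3, s)", OF dL[unfolded pe]])
       (use x in \<open>auto intro!: derivative_eq_intros simp: zero_prod_def\<close>)
  thus "pd5 L p = G (0,0,0,0,1)" unfolding pd5_def pe by (simp add: DERIV_imp_deriv)
qed



lemma core:
  fixes L :: "R5 \<Rightarrow> real" and tau zl zh :: "R3 \<Rightarrow> real" and u v :: "real \<Rightarrow> real"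
    and Rx Rl Rh :: "real \<Rightarrow> real \<Rightarrow> real"
  assumes ab: "a < b" and LC2: "C2_within ({a..b} \<times> UNIV) L"
    and tC: "C1_within ({a..b} \<times> UNIV) tau" and zlC: "C1_within ({a..b} \<times> UNIV) zl"
    and zhC: "C1_within ({a..b} \<times> UNIV) zh"
    and uC: "C2_within {a..b} u" and vC: "C2_within {a..b} v"
    and sx: "small_remainder a b Rx" and sl: "small_remainder a b Rl" and sh: "small_remainder a b Rh"
    and inv: "invariant_at a b L tau zl zh Rx Rl Rh u v"
    and EL: "EL_at a b L u v"
  shows "\<forall>x\<in>{a..b}. (noether_C a b L tau zl zh u v has_real_derivative 0) (at x within {a..b})"
proof -
  define I where "I = {a..b}"
  define S where "S = ({a..b} \<times> (UNIV :: (real \<times> real \<times> real \<times> real) set))"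
  define u1 where "u1 = dotx a b u"
  define v1 where "v1 = dotx a b v"
  have uC1: "C1_within {a..b} u" and vC1: "C1_within {a..b} v" using C2_real(1)[OF ab] uC vC by auto
  have du: "\<forall>t\<in>{a..b}. (u has_real_derivative u1 t) (at t within {a..b})" and u1c: "continuous_on {a..b} u1"
    using C1_real[OF ab uC1] unfolding u1_def dotx_def by auto
  have dv: "\<forall>t\<in>{a..b}. (v has_real_derivative v1 t) (at t within {a..b})" and v1c: "continuous_on {a..b} v1"
    using C1_real[OF ab vC1] unfolding v1_def dotx_def by auto
  have "\<forall>t\<in>{a..b}. \<exists>D. (u1 has_real_derivative D) (at t within {a..b})"
    using C2_real(2)[OF ab uC] unfolding u1_def dotx_def by simp
  then obtain u2 where du1: "\<forall>t\<in>{a..b}. (u1 has_real_derivative u2 t) (at t within {a..b})" by metis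
  have "\<forall>t\<in>{a..b}. \<exists>D. (v1 has_real_derivative D) (at t within {a..b})"
    using C2_real(2)[OF ab vC] unfolding v1_def dotx_def by simp
  then obtain v2 where dv1: "\<forall>t\<in>{a..b}. (v1 has_real_derivative v2 t) (at t within {a..b})" by metis
  define T where "T = (\<lambda>t. tau (t, u t, v t))"
  define ZL where "ZL = (\<lambda>t. zl (t, u t, v t))"
  define ZH where "ZH = (\<lambda>t. zh (t, u t, v t))"
  define T1 where "T1 = dotx a b T"
  define ZL1 where "ZL1 = dotx a b ZL"
  define ZH1 where "ZH1 = dotx a b ZH"
  have dT: "\<forall>t\<in>{a..b}. (T has_real_derivative T1 t) (at t within {a..b})" and T1c: "continuous_on {a..b} T1"
    using comp3[OF ab tC du u1c dv v1c] unfolding T_def T1_def by auto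
  have dZL: "\<forall>t\<in>{a..b}. (ZL has_real_derivative ZL1 t) (at t within {a..b})" and ZL1c: "continuous_on {a..b} ZL1"
    using comp3[OF ab zlC du u1c dv v1c] unfolding ZL_def ZL1_def by auto
  have dZH: "\<forall>t\<in>{a..b}. (ZH has_real_derivative ZH1 t) (at t within {a..b})" and ZH1c: "continuous_on {a..b} ZH1"
    using comp3[OF ab zhC du u1c dv v1c] unfolding ZH_def ZH1_def by auto
  obtain L' where dL: "\<forall>p\<in>{a..b} \<times> UNIV. (L has_derivative blinfun_apply (L' p)) (at p within {a..b} \<times> UNIV)"
    and L'C: "C1_within ({a..b} \<times> UNIV) L'" using LC2 unfolding C2_within_def by blast
  obtain L'' where dL': "\<forall>p\<in>{a..b} \<times> UNIV. (L' has_derivative blinfun_apply (L'' p)) (at p within {a..b} \<times> UNIV)"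
    using L'C unfolding C1_within_def by blast
  have Lc: "continuous_on ({a..b} \<times> UNIV) L"
    by (rule has_derivative_continuous_on[of _ _ "\<lambda>p. blinfun_apply (L' p)"]) (use dL in blast)
  define zz where "zz t = (t, u t, v t, u1 t, v1 t)" for t
  have K: "L' (zz x0) (T x0, ZL x0, ZH x0, ZL1 x0 - u1 x0 * T1 x0, ZH1 x0 - v1 x0 * T1 x0)
         + L (zz x0) * T1 x0 = 0" if "a < x0" "x0 < b" for x0
  proof -
    have inv': "\<forall>ta tb \<epsilon>. a \<le> ta \<and> ta \<le> tb \<and> tb \<le> b \<and> 0 < \<epsilon> \<longrightarrow>
       (let X = (\<lambda>x. x + \<epsilon> * T x + Rx \<epsilon> x) in
        \<forall>qhl qhh dqhl dqhh.
          (\<forall>x\<in>{a..b}. qhl (X x) = u x + \<epsilon> * ZL x + Rl \<epsilon> x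
                    \<and> qhh (X x) = v x + \<epsilon> * ZH x + Rh \<epsilon> x) \<and>
          (\<forall>y\<in>closed_segment (X ta) (X tb).
              (qhl has_real_derivative dqhl y) (at y within closed_segment (X ta) (X tb)) \<and>
              (qhh has_real_derivative dqhh y) (at y within closed_segment (X ta) (X tb)))
          \<longrightarrow>
          integral {ta..tb} (\<lambda>x. L (x, u x, v x, u1 x, v1 x))
          = oint (X ta) (X tb) (\<lambda>y. L (y, qhl y, qhh y, dqhl y, dqhh y)))"
      using inv unfolding invariant_at_def T_def ZL_def ZH_def u1_def v1_def .
    show ?thesis
      using infinv[OF ab Lc dL du u1c dv v1c dT T1c dZL ZL1c dZH ZH1c sx sl sh inv' that]
      unfolding zz_def .
  qed
  have zzS: "zz t \<in> {a..b} \<times> UNIV" if "t \<in> {a..b}" for t using that unfolding zz_def by auto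
  have pd: "pd2 L (zz t) = L' (zz t) (0,1,0,0,0)" "pd3 L (zz t) = L' (zz t) (0,0,1,0,0)"
     "pd4 L (zz t) = L' (zz t) (0,0,0,1,0)" "pd5 L (zz t) = L' (zz t) (0,0,0,0,1)" if "t \<in> {a..b}" for t
    using pd_lemma[OF dL[rule_format, OF zzS[OF that]] zzS[OF that]] by auto
  have dzz: "(zz has_vector_derivative (1, u1 t, v1 t, u2 t, v2 t)) (at t within {a..b})" if "t \<in> {a..b}" for t
    unfolding zz_def
    by (intro has_vector_derivative_Pair has_vector_derivative_id
        du[rule_format, OF that, unfolded has_real_derivative_iff_has_vector_derivative]
        dv[rule_format, OF that, unfolded has_real_derivative_iff_has_vector_derivative]
        du1[rule_format, OF that, unfolded has_real_derivative_iff_has_vector_derivative]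
        dv1[rule_format, OF that, unfolded has_real_derivative_iff_has_vector_derivative])
  have zzI: "zz ` {a..b} \<subseteq> {a..b} \<times> UNIV" unfolding zz_def by auto
  have dF: "((\<lambda>t. L (zz t)) has_real_derivative L' (zz t) (1, u1 t, v1 t, u2 t, v2 t)) (at t within {a..b})"
    if "t \<in> {a..b}" for t
    by (rule chain_within[OF dL[rule_format, OF zzS[OF that]] zzI dzz[OF that]])
  have ELf: "\<forall>x\<in>{a..b}. pd2 L (zz x) - dotx a b (\<lambda>t. pd4 L (zz t)) x = 0 \<and>
        pd3 L (zz x) - dotx a b (\<lambda>t. pd5 L (zz t)) x = 0"
    using EL unfolding EL_at_def zz_def u1_def v1_def .
  have dPe: "((\<lambda>t. blinfun_apply (L' (zz t)) e) has_real_derivative D) (at t within {a..b})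
     \<Longrightarrow> ((\<lambda>t. blinfun_apply (L' (zz t)) e) has_real_derivative dotx a b (\<lambda>t. blinfun_apply (L' (zz t)) e) t) (at t within {a..b})"
    if "t \<in> {a..b}" for t e D
  proof -
    assume h: "((\<lambda>t. blinfun_apply (L' (zz t)) e) has_real_derivative D) (at t within {a..b})"
    have "dotx a b (\<lambda>t. blinfun_apply (L' (zz t)) e) t = D"
      using vector_derivative_within_cbox[of a b t _ D] ab that h
      unfolding has_real_derivative_iff_has_vector_derivative cbox_interval dotx_def by blast
    thus ?thesis using h by simp
  qed
  have exP: "\<exists>D. ((\<lambda>t. blinfun_apply (L' (zz t)) e) has_real_derivative D) (at t within {a..b})"
    if "t \<in> {a..b}" for t e
  proof -
    have "((\<lambda>x. L' (zz x)) has_derivative (\<lambda>y. blinfun_apply (L'' (zz t)) (y *\<^sub>R (1, u1 t, v1 t, u2 t, v2 t)))) (at t within {a..b})"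
      by (rule has_derivative_in_compose2[OF dL'[rule_format] zzI that dzz[OF that, unfolded has_vector_derivative_def]])
    from blinfun.FDERIV[OF this has_derivative_const[of e]]
    have "(\<lambda>t. blinfun_apply (L' (zz t)) e) differentiable (at t within {a..b})"
      unfolding differentiable_def by blast
    thus ?thesis unfolding real_differentiable_def .
  qed
  have dP4: "((\<lambda>t. pd4 L (zz t)) has_real_derivative pd2 L (zz t)) (at t within {a..b})" if t: "t \<in> {a..b}" for t
  proof -
    obtain D where D: "((\<lambda>t. blinfun_apply (L' (zz t)) (0,0,0,1,0)) has_real_derivative D) (at t within {a..b})"
      using exP[OF t] by blast
    have eqf: "(\<lambda>t. blinfun_apply (L' (zz t)) (0,0,0,1,0)) s = pd4 L (zz s)" if "s \<in> {a..b}" for s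
      using pd(3)[OF that] by simp
    have D': "((\<lambda>t. pd4 L (zz t)) has_real_derivative D) (at t within {a..b})"
      by (rule has_field_derivative_transform_within[OF D zero_less_one t]) (use eqf in auto)
    have "dotx a b (\<lambda>t. pd4 L (zz t)) t = D"
      using vector_derivative_within_cbox[of a b t _ D] ab t D'
      unfolding has_real_derivative_iff_has_vector_derivative cbox_interval dotx_def by blast
    thus ?thesis using D' ELf t by auto
  qed
  have dP5: "((\<lambda>t. pd5 L (zz t)) has_real_derivative pd3 L (zz t)) (at t within {a..b})" if t: "t \<in> {a..b}" for t
  proof -
    obtain D where D: "((\<lambda>t. blinfun_apply (L' (zz t)) (0,0,0,0,1)) has_real_derivative D) (at t within {a..b})"
      using exP[OF t] by blast
    have eqf: "(\<lambda>t. blinfun_apply (L' (zz t)) (0,0,0,0,1)) s = pd5 L (zz s)" if "s \<in> {a..b}" for s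
      using pd(4)[OF that] by simp
    have D': "((\<lambda>t. pd5 L (zz t)) has_real_derivative D) (at t within {a..b})"
      by (rule has_field_derivative_transform_within[OF D zero_less_one t]) (use eqf in auto)
    have "dotx a b (\<lambda>t. pd5 L (zz t)) t = D"
      using vector_derivative_within_cbox[of a b t _ D] ab t D'
      unfolding has_real_derivative_iff_has_vector_derivative cbox_interval dotx_def by blast
    thus ?thesis using D' ELf t by auto
  qed
  define C where "C = noether_C a b L tau zl zh u v"
  have Ceq: "C t = pd4 L (zz t) * ZL t + pd5 L (zz t) * ZH t
      + (L (zz t) - pd4 L (zz t) * u1 t - pd5 L (zz t) * v1 t) * T t" for t
    unfolding C_def noether_C_def Let_def zz_def u1_def v1_def ZL_def ZH_def T_def by simp
  define E where "E t = (pd2 L (zz t) * ZL t + ZL1 t * pd4 L (zz t)) + (pd3 L (zz t) * ZH t + ZH1 t * pd5 L (zz t))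
      + ((L' (zz t) (1, u1 t, v1 t, u2 t, v2 t) - (pd2 L (zz t) * u1 t + u2 t * pd4 L (zz t))
          - (pd3 L (zz t) * v1 t + v2 t * pd5 L (zz t))) * T t
         + T1 t * (L (zz t) - pd4 L (zz t) * u1 t - pd5 L (zz t) * v1 t))" for t
  have dC: "(C has_real_derivative E t) (at t within {a..b})" if t: "t \<in> {a..b}" for t
  proof -
    have 1: "((\<lambda>t. pd4 L (zz t) * ZL t) has_real_derivative pd2 L (zz t) * ZL t + ZL1 t * pd4 L (zz t)) (at t within {a..b})"
      by (rule DERIV_mult[OF dP4[OF t] dZL[rule_format, OF t]])
    have 2: "((\<lambda>t. pd5 L (zz t) * ZH t) has_real_derivative pd3 L (zz t) * ZH t + ZH1 t * pd5 L (zz t)) (at t within {a..b})"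
      by (rule DERIV_mult[OF dP5[OF t] dZH[rule_format, OF t]])
    have 3: "((\<lambda>t. pd4 L (zz t) * u1 t) has_real_derivative pd2 L (zz t) * u1 t + u2 t * pd4 L (zz t)) (at t within {a..b})"
      by (rule DERIV_mult[OF dP4[OF t] du1[rule_format, OF t]])
    have 4: "((\<lambda>t. pd5 L (zz t) * v1 t) has_real_derivative pd3 L (zz t) * v1 t + v2 t * pd5 L (zz t)) (at t within {a..b})"
      by (rule DERIV_mult[OF dP5[OF t] dv1[rule_format, OF t]])
    have 5: "((\<lambda>t. L (zz t) - pd4 L (zz t) * u1 t - pd5 L (zz t) * v1 t) has_real_derivative
        L' (zz t) (1, u1 t, v1 t, u2 t, v2 t) - (pd2 L (zz t) * u1 t + u2 t * pd4 L (zz t))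
          - (pd3 L (zz t) * v1 t + v2 t * pd5 L (zz t))) (at t within {a..b})"
      by (rule DERIV_diff[OF DERIV_diff[OF dF[OF t] 3] 4])
    have 6: "((\<lambda>t. (L (zz t) - pd4 L (zz t) * u1 t - pd5 L (zz t) * v1 t) * T t) has_real_derivative
        (L' (zz t) (1, u1 t, v1 t, u2 t, v2 t) - (pd2 L (zz t) * u1 t + u2 t * pd4 L (zz t))
          - (pd3 L (zz t) * v1 t + v2 t * pd5 L (zz t))) * T t
         + T1 t * (L (zz t) - pd4 L (zz t) * u1 t - pd5 L (zz t) * v1 t)) (at t within {a..b})"
      by (rule DERIV_mult[OF 5 dT[rule_format, OF t]])
    have "((\<lambda>t. pd4 L (zz t) * ZL t + pd5 L (zz t) * ZH t
      + (L (zz t) - pd4 L (zz t) * u1 t - pd5 L (zz t) * v1 t) * T t) has_real_derivative E t) (at t within {a..b})"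
      unfolding E_def by (rule DERIV_add[OF DERIV_add[OF 1 2] 6])
    moreover have "C = (\<lambda>t. pd4 L (zz t) * ZL t + pd5 L (zz t) * ZH t
      + (L (zz t) - pd4 L (zz t) * u1 t - pd5 L (zz t) * v1 t) * T t)" using Ceq by (intro ext) simp
    ultimately show ?thesis by simp
  qed
  have E0: "E t = 0" if "a < t" "t < b" for t
  proof -
    have t: "t \<in> {a..b}" using that by auto
    have "E t = L' (zz t) (T t, ZL t, ZH t, ZL1 t - u1 t * T1 t, ZH1 t - v1 t * T1 t) + L (zz t) * T1 t"
    proof -
      note l1 = lin5[of "L' (zz t)" "1" "u1 t" "v1 t" "u2 t" "v2 t"]
      note l2 = lin5[of "L' (zz t)" "T t" "ZL t" "ZH t" "ZL1 t - u1 t * T1 t" "ZH1 t - v1 t * T1 t"]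
      show ?thesis unfolding E_def pd[OF t] l1 l2 by (simp add: algebra_simps)
    qed
    thus ?thesis using K[OF that] by simp
  qed
  have Cc: "continuous_on {a..b} C" using dC by (intro DERIV_continuous_on) auto
  have Cconst: "C y = C a" if y: "y \<in> {a..b}" for y
  proof (cases "y = a")
    case True
    thus ?thesis by simp
  next
    case False
    hence ay: "a < y" using y by auto
    have cy: "continuous_on {a..y} C" by (rule continuous_on_subset[OF Cc]) (use y in auto)
    have dy: "DERIV C x :> 0" if x: "a < x" "x < y" for x
    proof -
      have xb: "x < b" using x y by auto
      have xI: "x \<in> {a..b}" using x xb by auto
      have at: "at x within {a..b} = at x" using x xb by (intro at_within_Icc_at) auto
      have "(C has_real_derivative E x) (at x within {a..b})" by (rule dC[OF xI])
      hence "(C has_real_derivative E x) (at x)" by (simp only: at)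
      moreover have "E x = 0" by (rule E0[OF x(1) xb])
      ultimately show ?thesis by simp
    qed
    show ?thesis by (rule DERIV_isconst_end[OF ay cy dy])
  qed
  show ?thesis
  proof
    fix x assume x: "x \<in> {a..b}"
    have "((\<lambda>_. C a) has_real_derivative 0) (at x within {a..b})" by (rule DERIV_const)
    hence "(C has_real_derivative 0) (at x within {a..b})"
    proof (rule has_field_derivative_transform_within[OF _ zero_less_one x])
      fix z assume z: "z \<in> {a..b}" "dist z x < 1"
      show "C a = C z" using Cconst[OF z(1)] by (rule sym)
    qed
    thus "(noether_C a b L tau zl zh u v has_real_derivative 0) (at x within {a..b})"
      unfolding C_def .
  qed
qed

theorem mainTheorem3:
  fixes a b :: real
    and Ll Lh :: "real \<Rightarrow> R5 \<Rightarrow> real"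
    and tau :: "R3 \<Rightarrow> real"
    and zl zh :: "real \<Rightarrow> R3 \<Rightarrow> real"
    and Rx Rl Rh :: "(real \<Rightarrow> real \<Rightarrow> real) \<Rightarrow> real \<Rightarrow> real \<Rightarrow> real \<Rightarrow> real"
  assumes ab: "a < b"
    and L_C2: "\<forall>r\<in>{0..1}. C2_within ({a..b} \<times> UNIV) (Ll r) \<and> C2_within ({a..b} \<times> UNIV) (Lh r)"
    and tau_C1: "C1_within ({a..b} \<times> UNIV) tau"
    and zeta_C1: "\<forall>r\<in>{0..1}. C1_within ({a..b} \<times> UNIV) (zl r) \<and> C1_within ({a..b} \<times> UNIV) (zh r)"
    and remainders: "\<forall>q. fuzzy_C2_fun a b q \<longrightarrow> (\<forall>r\<in>{0..1}.
          small_remainder a b (Rx q r) \<and> small_remainder a b (Rl q r) \<and> small_remainder a b (Rh q r))"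
    and invariance: "\<forall>q. fuzzy_C2_fun a b q \<longrightarrow> (\<forall>r\<in>{0..1}.
          invariant_at a b (Ll r) tau (zl r) (zh r) (Rx q r) (Rl q r) (Rh q r)
            (\<lambda>x. flower (q x) r) (\<lambda>x. fupper (q x) r) \<and>
          invariant_at a b (Lh r) tau (zl r) (zh r) (Rx q r) (Rl q r) (Rh q r)
            (\<lambda>x. flower (q x) r) (\<lambda>x. fupper (q x) r))"
  shows "\<forall>q. fuzzy_C2_fun a b q \<and>
           (\<forall>r\<in>{0..1}. EL_at a b (Ll r) (\<lambda>x. flower (q x) r) (\<lambda>x. fupper (q x) r) \<and>
                        EL_at a b (Lh r) (\<lambda>x. flower (q x) r) (\<lambda>x. fupper (q x) r))
         \<longrightarrow> (\<forall>r\<in>{0..1}. \<forall>x\<in>{a..b}.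
               ((noether_C a b (Ll r) tau (zl r) (zh r) (\<lambda>x. flower (q x) r) (\<lambda>x. fupper (q x) r))
                  has_real_derivative 0) (at x within {a..b}) \<and>
               ((noether_C a b (Lh r) tau (zl r) (zh r) (\<lambda>x. flower (q x) r) (\<lambda>x. fupper (q x) r))
                  has_real_derivative 0) (at x within {a..b}))"
proof (intro allI impI ballI conjI)
  fix q :: "real \<Rightarrow> real \<Rightarrow> real" and r x :: real
  assume hq: "fuzzy_C2_fun a b q \<and>
           (\<forall>r\<in>{0..1}. EL_at a b (Ll r) (\<lambda>x. flower (q x) r) (\<lambda>x. fupper (q x) r) \<and>
                        EL_at a b (Lh r) (\<lambda>x. flower (q x) r) (\<lambda>x. fupper (q x) r))"
    and r: "r \<in> {0..1}" and x: "x \<in> {a..b}"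
  have fq: "fuzzy_C2_fun a b q" using hq by blast
  have uC: "C2_within {a..b} (\<lambda>x. flower (q x) r)" and vC: "C2_within {a..b} (\<lambda>x. fupper (q x) r)"
    using fq r unfolding fuzzy_C2_fun_def by auto
  have rem: "small_remainder a b (Rx q r)" "small_remainder a b (Rl q r)" "small_remainder a b (Rh q r)"
    using remainders fq r by auto
  have iv: "invariant_at a b (Ll r) tau (zl r) (zh r) (Rx q r) (Rl q r) (Rh q r)
            (\<lambda>x. flower (q x) r) (\<lambda>x. fupper (q x) r)"
     "invariant_at a b (Lh r) tau (zl r) (zh r) (Rx q r) (Rl q r) (Rh q r)
            (\<lambda>x. flower (q x) r) (\<lambda>x. fupper (q x) r)"
    using invariance fq r by auto
  have el: "EL_at a b (Ll r) (\<lambda>x. flower (q x) r) (\<lambda>x. fupper (q x) r)"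
     "EL_at a b (Lh r) (\<lambda>x. flower (q x) r) (\<lambda>x. fupper (q x) r)"
    using hq r by auto
  have LC: "C2_within ({a..b} \<times> UNIV) (Ll r)" "C2_within ({a..b} \<times> UNIV) (Lh r)" using L_C2 r by auto
  have zC: "C1_within ({a..b} \<times> UNIV) (zl r)" "C1_within ({a..b} \<times> UNIV) (zh r)" using zeta_C1 r by auto
  show "(noether_C a b (Ll r) tau (zl r) (zh r) (\<lambda>x. flower (q x) r) (\<lambda>x. fupper (q x) r)
                  has_real_derivative 0) (at x within {a..b})"
    using core[OF ab LC(1) tau_C1 zC uC vC rem iv(1) el(1)] x by blast
  show "(noether_C a b (Lh r) tau (zl r) (zh r) (\<lambda>x. flower (q x) r) (\<lambda>x. fupper (q x) r)
                  has_real_derivative 0) (at x within {a..b})"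
    using core[OF ab LC(2) tau_C1 zC uC vC rem iv(2) el(2)] x by blast
qed

end
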